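(* Let $R$ be a finite Frobenius ring and $M=\{x_0=0,x_1,\ldots,x_n\}$ a finite $R$-bimodule. Then all matrices of the form $[\chi(B(x_i,x_j))]_{0\le i,j\le n}$, where $\chi$ ranges over generating characters of $R$ and $B$ over non-degenerate bilinear forms on $M$, are equivalent to one another.
   Context: A bilinear form on $M$ is a biadditive map $B:M\times M\to R$ with $B(rx,y)=rB(x,y)$ and $B(x,yr)=B(x,y)r$; it is non-degenerate if its left and right kernels are zero. A character of $R$ is a group homomorphism $(R,+)\to\mathbb{C}^*$; it is generating if its kernel contains no nonzero left ideal and no nonzero right ideal of $R$. Two matrices with root-of-unity entries are equivalent if one is obtained from the other by permuting rows and columns and multiplying rows and columns by roots of unity. *)

theory Defs
  imports Complex_Main "HOL-Combinatorics.Permutations"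
begin

definition bimodule :: "('a::ring_1 \<Rightarrow> 'm::ab_group_add \<Rightarrow> 'm) \<Rightarrow> ('m \<Rightarrow> 'a \<Rightarrow> 'm) \<Rightarrow> bool" where
  "bimodule lm rm \<longleftrightarrow>
     (\<forall>r x y. lm r (x + y) = lm r x + lm r y) \<and>
     (\<forall>r s x. lm (r + s) x = lm r x + lm s x) \<and>
     (\<forall>r s x. lm (r * s) x = lm r (lm s x)) \<and>
     (\<forall>x. lm 1 x = x) \<and>
     (\<forall>r x y. rm (x + y) r = rm x r + rm y r) \<and>
     (\<forall>r s x. rm x (r + s) = rm x r + rm x s) \<and>
     (\<forall>r s x. rm x (r * s) = rm (rm x r) s) \<and>
     (\<forall>x. rm x 1 = x) \<and>
     (\<forall>r s x. rm (lm r x) s = lm r (rm x s))"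

definition bilinear_form ::
  "('a::ring_1 \<Rightarrow> 'm::ab_group_add \<Rightarrow> 'm) \<Rightarrow> ('m \<Rightarrow> 'a \<Rightarrow> 'm) \<Rightarrow> ('m \<Rightarrow> 'm \<Rightarrow> 'a) \<Rightarrow> bool" where
  "bilinear_form lm rm B \<longleftrightarrow>
     (\<forall>x x' y. B (x + x') y = B x y + B x' y) \<and>
     (\<forall>x y y'. B x (y + y') = B x y + B x y') \<and>
     (\<forall>r x y. B (lm r x) y = r * B x y) \<and>
     (\<forall>r x y. B x (rm y r) = B x y * r)"

definition nondegenerate :: "('m::ab_group_add \<Rightarrow> 'm \<Rightarrow> 'a::ring_1) \<Rightarrow> bool" where
  "nondegenerate B \<longleftrightarrow>
     {x. \<forall>y. B x y = 0} = {0} \<and> {y. \<forall>x. B x y = 0} = {0}"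

definition character :: "('a::ring_1 \<Rightarrow> complex) \<Rightarrow> bool" where
  "character \<chi> \<longleftrightarrow> (\<forall>a b. \<chi> (a + b) = \<chi> a * \<chi> b) \<and> (\<forall>a. \<chi> a \<noteq> 0)"

definition left_ideal :: "'a::ring_1 set \<Rightarrow> bool" where
  "left_ideal I \<longleftrightarrow> 0 \<in> I \<and> (\<forall>x\<in>I. \<forall>y\<in>I. x + y \<in> I) \<and> (\<forall>x\<in>I. - x \<in> I)
     \<and> (\<forall>r. \<forall>x\<in>I. r * x \<in> I)"

definition right_ideal :: "'a::ring_1 set \<Rightarrow> bool" where
  "right_ideal I \<longleftrightarrow> 0 \<in> I \<and> (\<forall>x\<in>I. \<forall>y\<in>I. x + y \<in> I) \<and> (\<forall>x\<in>I. - x \<in> I)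
     \<and> (\<forall>r. \<forall>x\<in>I. x * r \<in> I)"

definition generating_character :: "('a::ring_1 \<Rightarrow> complex) \<Rightarrow> bool" where
  "generating_character \<chi> \<longleftrightarrow> character \<chi> \<and>
     (\<forall>I. left_ideal I \<and> I \<subseteq> {a. \<chi> a = 1} \<longrightarrow> I = {0}) \<and>
     (\<forall>I. right_ideal I \<and> I \<subseteq> {a. \<chi> a = 1} \<longrightarrow> I = {0})"

text \<open>A finite ring is Frobenius iff it admits a generating character (Wood);
we use this as the definition for finite rings.\<close>
definition Frobenius_ring :: "'a::{ring_1,finite} itself \<Rightarrow> bool" where
  "Frobenius_ring _ \<longleftrightarrow> (\<exists>\<chi>::'a \<Rightarrow> complex. generating_character \<chi>)"

definition root_of_unity :: "complex \<Rightarrow> bool" where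
  "root_of_unity z \<longleftrightarrow> (\<exists>k::nat. k > 0 \<and> z ^ k = 1)"

definition mat_equivalent :: "nat \<Rightarrow> (nat \<Rightarrow> nat \<Rightarrow> complex) \<Rightarrow> (nat \<Rightarrow> nat \<Rightarrow> complex) \<Rightarrow> bool" where
  "mat_equivalent n A C \<longleftrightarrow>
     (\<exists>\<sigma> \<tau> u v. \<sigma> permutes {0..n} \<and> \<tau> permutes {0..n} \<and>
        (\<forall>i\<le>n. root_of_unity (u i)) \<and> (\<forall>j\<le>n. root_of_unity (v j)) \<and>
        (\<forall>i\<le>n. \<forall>j\<le>n. C i j = u i * v j * A (\<sigma> i) (\<tau> j)))"

end

theory Submission
  imports Defs
begin

lemma char_sum_zero:
  fixes \<psi> :: "'m::{ab_group_add,finite} \<Rightarrow> complex"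
  assumes mult: "\<And>a b. \<psi> (a + b) = \<psi> a * \<psi> b" and ne: "\<psi> a0 \<noteq> 1"
  shows "(\<Sum>x\<in>UNIV. \<psi> x) = 0"
proof -
  have "(\<Sum>x\<in>UNIV. \<psi> (x + a0)) = (\<Sum>x\<in>UNIV. \<psi> x)"
    by (rule sum.reindex_bij_witness[where i="\<lambda>x. x - a0" and j="\<lambda>x. x + a0"]) auto
  moreover have "(\<Sum>x\<in>UNIV. \<psi> (x + a0)) = \<psi> a0 * (\<Sum>x\<in>UNIV. \<psi> x)"
    by (simp add: mult sum_distrib_left mult.commute)
  ultimately have "(1 - \<psi> a0) * (\<Sum>x\<in>UNIV. \<psi> x) = 0" by (simp add: algebra_simps)
  with ne show ?thesis by simp
qed

lemma char_0:
  assumes "character \<chi>" shows "\<chi> 0 = 1"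
proof -
  have "\<chi> 0 = \<chi> 0 * \<chi> 0" using assms unfolding character_def by (metis add_0)
  moreover have "\<chi> 0 \<noteq> 0" using assms unfolding character_def by blast
  ultimately show ?thesis by (metis mult_cancel_left1)
qed

lemma char_diff:
  assumes "character \<chi>" "\<chi> p = \<chi> q" shows "\<chi> (p - q) = 1"
proof -
  have "\<chi> p = \<chi> (p - q) * \<chi> q" using assms(1) unfolding character_def by (metis diff_add_cancel)
  moreover have "\<chi> q \<noteq> 0" using assms(1) unfolding character_def by blast
  ultimately show ?thesis using assms(2) by simp
qed

lemma bil_basic:
  assumes "bilinear_form lm rm B"
  shows "B 0 y = 0" "B x 0 = 0" "B (-x) y = - B x y" "B x (-y) = - B x y"
    "B x (a - b) = B x a - B x b"
proof -
  have a1: "\<And>x x' y. B (x + x') y = B x y + B x' y" and a2: "\<And>x y y'. B x (y + y') = B x y + B x y'"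
    using assms unfolding bilinear_form_def by blast+
  show "B 0 y = 0" using a1[of 0 0 y] by simp
  show "B x 0 = 0" using a2[of x 0 0] by simp
  show "B (-x) y = - B x y" using a1[of x "-x" y] \<open>B 0 y = 0\<close> by (simp add: eq_neg_iff_add_eq_0 add.commute)
  show n: "B x (-y) = - B x y" using a2[of x y "-y"] \<open>B x 0 = 0\<close> by (simp add: eq_neg_iff_add_eq_0 add.commute)
  show "B x (a - b) = B x a - B x b" using a2[of x a "-b"] a2[of x b "-b"] \<open>B x 0 = 0\<close>
    by (simp add: eq_neg_iff_add_eq_0 add.commute)
qed

lemma left_inj:
  assumes gc: "generating_character \<chi>" and bl: "bilinear_form lm rm B" and nd: "nondegenerate B"
    and h: "\<And>x. \<chi> (B x y) = 1"
  shows "y = 0"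
proof -
  let ?I = "range (\<lambda>x. B x y)"
  have a1: "\<And>x x' y. B (x + x') y = B x y + B x' y" and a3: "\<And>r x y. B (lm r x) y = r * B x y"
    using bl unfolding bilinear_form_def by blast+
  have "left_ideal ?I" unfolding left_ideal_def
  proof (intro conjI ballI allI)
    show "0 \<in> ?I" using bil_basic(1)[OF bl] by (metis rangeI)
    fix a b assume "a \<in> ?I" "b \<in> ?I"
    then obtain u v where "a = B u y" "b = B v y" by blast
    then show "a + b \<in> ?I" using a1[of u v y] by (metis rangeI)
  next
    fix a assume "a \<in> ?I" then obtain u where "a = B u y" by blast
    then show "- a \<in> ?I" using bil_basic(3)[OF bl, of u y] by (metis rangeI)
  next
    fix r a assume "a \<in> ?I" then obtain u where "a = B u y" by blast
    then show "r * a \<in> ?I" using a3[of r u y] by (metis rangeI)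
  qed
  moreover have "?I \<subseteq> {a. \<chi> a = 1}" using h by auto
  ultimately have "?I = {0}" using gc unfolding generating_character_def by blast
  then have "\<forall>x. B x y = 0" by auto
  then show ?thesis using nd unfolding nondegenerate_def by blast
qed

lemma right_inj:
  assumes gc: "generating_character \<chi>" and bl: "bilinear_form lm rm B" and nd: "nondegenerate B"
    and h: "\<And>y. \<chi> (B x y) = 1"
  shows "x = 0"
proof -
  let ?I = "range (\<lambda>y. B x y)"
  have a2: "\<And>x y y'. B x (y + y') = B x y + B x y'" and a4: "\<And>r x y. B x (rm y r) = B x y * r"
    using bl unfolding bilinear_form_def by blast+
  have "right_ideal ?I" unfolding right_ideal_def
  proof (intro conjI ballI allI)
    show "0 \<in> ?I" using bil_basic(2)[OF bl] by (metis rangeI)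
    fix a b assume "a \<in> ?I" "b \<in> ?I"
    then obtain u v where "a = B x u" "b = B x v" by blast
    then show "a + b \<in> ?I" using a2[of x u v] by (metis rangeI)
  next
    fix a assume "a \<in> ?I" then obtain u where "a = B x u" by blast
    then show "- a \<in> ?I" using bil_basic(4)[OF bl, of x u] by (metis rangeI)
  next
    fix r a assume "a \<in> ?I" then obtain u where "a = B x u" by blast
    then show "a * r \<in> ?I" using a4[of x u r] by (metis rangeI)
  qed
  moreover have "?I \<subseteq> {a. \<chi> a = 1}" using h by auto
  ultimately have "?I = {0}" using gc unfolding generating_character_def by blast
  then have "\<forall>y. B x y = 0" by auto
  then show ?thesis using nd unfolding nondegenerate_def by blast
qed

lemma row_sum:
  fixes B :: "'m::{ab_group_add,finite} \<Rightarrow> 'm \<Rightarrow> 'a::ring_1"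
  assumes gc: "generating_character \<chi>" and bl: "bilinear_form lm rm B" and nd: "nondegenerate B"
  shows "(\<Sum>y\<in>UNIV. \<chi> (B x y)) = (if x = 0 then of_nat (card (UNIV::'m set)) else 0)"
proof (cases "x = 0")
  case True
  have "character \<chi>" using gc unfolding generating_character_def by blast
  then show ?thesis using True bil_basic(1)[OF bl] char_0 by simp
next
  case False
  then obtain y0 where y0: "\<chi> (B x y0) \<noteq> 1" using right_inj[OF gc bl nd] by blast
  have "\<And>a b. \<chi> (B x (a + b)) = \<chi> (B x a) * \<chi> (B x b)"
    using gc bl unfolding generating_character_def character_def bilinear_form_def by simp
  then show ?thesis using char_sum_zero[where \<psi>="\<lambda>y. \<chi> (B x y)", OF _ y0] False by simp
qed

lemma char_represented:
  fixes B :: "'m::{ab_group_add,finite} \<Rightarrow> 'm \<Rightarrow> 'a::ring_1" and \<psi> :: "'m \<Rightarrow> complex"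
  assumes gc: "generating_character \<chi>" and bl: "bilinear_form lm rm B" and nd: "nondegenerate B"
    and pm: "\<And>a b. \<psi> (a + b) = \<psi> a * \<psi> b" and pn: "\<And>a. \<psi> a \<noteq> 0"
  shows "\<exists>y. \<forall>x. \<psi> x = \<chi> (B x y)"
proof (rule ccontr)
  assume "\<not> ?thesis"
  then have ex: "\<forall>y. \<exists>x. \<psi> x \<noteq> \<chi> (B x y)" by blast
  have ch: "character \<chi>" using gc unfolding generating_character_def by blast
  have p0: "\<psi> 0 = 1" using pm[of 0 0] pn[of 0] by (metis add_0 mult_cancel_left1)
  have pinv: "\<psi> (-x) * \<psi> x = 1" for x using pm[of "-x" x] p0 by simp
  have zero: "(\<Sum>x\<in>UNIV. \<psi> (-x) * \<chi> (B x y)) = 0" for y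
  proof -
    obtain x0 where x0: "\<psi> x0 \<noteq> \<chi> (B x0 y)" using ex by blast
    have "\<psi> (-x0) * \<chi> (B x0 y) \<noteq> 1"
    proof
      assume "\<psi> (-x0) * \<chi> (B x0 y) = 1"
      then have "\<psi> x0 * (\<psi> (-x0) * \<chi> (B x0 y)) = \<psi> x0" by simp
      then have "\<chi> (B x0 y) = \<psi> x0" using pinv[of x0] by (metis mult.assoc mult.commute mult_1)
      with x0 show False by simp
    qed
    moreover have "\<And>a b. \<psi> (-(a + b)) * \<chi> (B (a + b) y) = (\<psi> (-a) * \<chi> (B a y)) * (\<psi> (-b) * \<chi> (B b y))"
      using pm[of "-a" "-b" for a b] ch bl unfolding character_def bilinear_form_def by (simp add: algebra_simps)
    ultimately show ?thesis using char_sum_zero[where \<psi>="\<lambda>x. \<psi> (-x) * \<chi> (B x y)"] by blast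
  qed
  have "(\<Sum>y\<in>UNIV. \<Sum>x\<in>UNIV. \<psi> (-x) * \<chi> (B x y)) = 0" using zero by simp
  moreover have "(\<Sum>y\<in>UNIV. \<Sum>x\<in>UNIV. \<psi> (-x) * \<chi> (B x y)) = (\<Sum>x\<in>UNIV. \<psi> (-x) * (\<Sum>y\<in>UNIV. \<chi> (B x y)))"
    by (subst sum.swap) (simp add: sum_distrib_left)
  moreover have "\<dots> = (\<Sum>x\<in>UNIV. (if (x::'m) = 0 then of_nat (card (UNIV::'m set)) else 0))"
    by (rule sum.cong[OF refl]) (simp add: row_sum[OF gc bl nd] p0)
  moreover have "\<dots> = of_nat (card (UNIV::'m set))" by simp
  ultimately show False by simp
qed

theorem propositionA5:
  fixes lm :: "'a::{ring_1,finite} \<Rightarrow> 'm::{ab_group_add,finite} \<Rightarrow> 'm"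
    and rm :: "'m \<Rightarrow> 'a \<Rightarrow> 'm"
    and x :: "nat \<Rightarrow> 'm" and n :: nat
  assumes "Frobenius_ring TYPE('a)"
    and "bimodule lm rm"
    and "bij_betw x {0..n} (UNIV :: 'm set)" and "x 0 = 0"
    and "generating_character \<chi>1" and "bilinear_form lm rm B1" and "nondegenerate B1"
    and "generating_character \<chi>2" and "bilinear_form lm rm B2" and "nondegenerate B2"
  shows "mat_equivalent n (\<lambda>i j. \<chi>1 (B1 (x i) (x j))) (\<lambda>i j. \<chi>2 (B2 (x i) (x j)))"
proof -
  note gc1 = assms(5) and bl1 = assms(6) and nd1 = assms(7)
  note gc2 = assms(8) and bl2 = assms(9) and nd2 = assms(10)
  note bx = assms(3)
  have ch2: "character \<chi>2" using gc2 unfolding generating_character_def by blast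
  have ex: "\<exists>y. \<forall>z. \<chi>2 (B2 z y') = \<chi>1 (B1 z y)" for y'
  proof -
    have "\<exists>y. \<forall>z. (\<lambda>z. \<chi>2 (B2 z y')) z = \<chi>1 (B1 z y)"
      by (rule char_represented[OF gc1 bl1 nd1])
        (use ch2 bl2 in \<open>auto simp: character_def bilinear_form_def\<close>)
    then show ?thesis by simp
  qed
  define f where "f y' = (SOME y. \<forall>z. \<chi>2 (B2 z y') = \<chi>1 (B1 z y))" for y'
  have f: "\<chi>2 (B2 z y') = \<chi>1 (B1 z (f y'))" for z y'
    using someI_ex[OF ex[of y']] unfolding f_def by blast
  have "inj f"
  proof (rule injI)
    fix a b assume "f a = f b"
    then have "\<chi>2 (B2 z a) = \<chi>2 (B2 z b)" for z using f by metis
    then have "\<chi>2 (B2 z (a - b)) = 1" for z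
      using char_diff[OF ch2] bil_basic(5)[OF bl2] by metis
    then have "a - b = 0" using left_inj[OF gc2 bl2 nd2] by blast
    then show "a = b" by simp
  qed
  then have bf: "bij f" using finite_UNIV_inj_surj[of f] by (simp add: bij_def)
  define \<tau> where "\<tau> j = (if j \<le> n then inv_into {0..n} x (f (x j)) else j)" for j
  have b1: "bij_betw (f \<circ> x) {0..n} UNIV"
    using bij_betw_trans[OF bx] bf by (metis bij_betw_subset subset_UNIV)
  have bcomp: "bij_betw (inv_into {0..n} x \<circ> (f \<circ> x)) {0..n} {0..n}"
    by (rule bij_betw_trans[OF b1 bij_betw_inv_into[OF bx]])
  have "bij_betw \<tau> {0..n} {0..n}"
    by (rule bij_betw_cong[THEN iffD1, OF _ bcomp]) (auto simp: \<tau>_def)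
  then have perm: "\<tau> permutes {0..n}"
    by (rule bij_imp_permutes) (auto simp: \<tau>_def)
  have xt: "x (\<tau> j) = f (x j)" if "j \<le> n" for j
    using that bx unfolding \<tau>_def by (simp add: bij_betw_def f_inv_into_f)
  show ?thesis unfolding mat_equivalent_def
  proof (rule exI[of _ id], rule exI[of _ \<tau>], rule exI[of _ "\<lambda>_. 1"], rule exI[of _ "\<lambda>_. 1"], intro conjI)
    show "id permutes {0..n}" by (rule permutes_id)
    show "\<forall>i\<le>n. root_of_unity 1" by (auto simp: root_of_unity_def intro: exI[of _ 1])
    show "\<forall>j\<le>n. root_of_unity 1" by (auto simp: root_of_unity_def intro: exI[of _ 1])
  qed (use perm xt f in auto)
qed

end
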